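(* Let $\lambda_1,\lambda_2$ be as in the context and $K\in(-1,1)$. Consider the initial value problem $$b'(v)=\sqrt{\lambda_1^2-K\left(\lambda_1^2\cos^2 b(v)+\lambda_2^2\sin^2 b(v)\right)},\qquad b(0)=0.$$ Its solution $b$ is well-defined on all of $\mathbb{R}$ and satisfies: (1) $b$ is an increasing diffeomorphism from $\mathbb{R}$ to $\mathbb{R}$; (2) $b$ is odd; (3) there exists a real number $W>0$ such that $b(v+W)=b(v)+\pi$ for all $v\in\mathbb{R}$; (4) $b(kW)=k\pi$ for all $k\in\mathbb{Z}$; (5) $b(kW/2)=k\pi/2$ for all odd integers $k$.
   Context: Either $\lambda_1>\lambda_2>0$ or $\lambda_1=\lambda_2=1$. *)

theory Defs
  imports "HOL-Analysis.Analysis"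
begin

definition bRHS :: "real \<Rightarrow> real \<Rightarrow> real \<Rightarrow> real \<Rightarrow> real" where
  "bRHS l1 l2 K x = sqrt (l1\<^sup>2 - K * (l1\<^sup>2 * (cos x)\<^sup>2 + l2\<^sup>2 * (sin x)\<^sup>2))"

definition is_b_solution :: "real \<Rightarrow> real \<Rightarrow> real \<Rightarrow> (real \<Rightarrow> real) \<Rightarrow> bool" where
  "is_b_solution l1 l2 K b \<longleftrightarrow>
     b 0 = 0 \<and> (\<forall>v. (b has_real_derivative bRHS l1 l2 K (b v)) (at v))"

definition real_diffeo :: "(real \<Rightarrow> real) \<Rightarrow> bool" where
  "real_diffeo f \<longleftrightarrow> bij f \<and>
     (\<forall>x. f differentiable (at x)) \<and> continuous_on UNIV (deriv f) \<and>
     (\<forall>y. inv f differentiable (at y)) \<and> continuous_on UNIV (deriv (inv f))"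

end

theory Submission
  imports Defs
begin

lemma const_from_deriv:
  fixes h :: "real \<Rightarrow> real"
  assumes "\<And>x. (h has_real_derivative 0) (at x)"
  shows "h x = h y"
  using assms DERIV_isconst_all by blast

lemma main_lemma:
  fixes f :: "real \<Rightarrow> real" and M :: real
  assumes cont: "\<And>x. isCont f x" and pos: "\<And>x. f x > 0" and bnd: "\<And>x. f x \<le> M"
    and per: "\<And>x. f (x + pi) = f x" and refl: "\<And>x. f (pi - x) = f x"
  shows "\<exists>b. (b 0 = 0 \<and> (\<forall>v. (b has_real_derivative f (b v)) (at v))) \<and>
     (\<forall>c. (c 0 = 0 \<and> (\<forall>v. (c has_real_derivative f (c v)) (at v))) \<longrightarrow> c = b) \<and>
     strict_mono b \<and> real_diffeo b \<and>
     (\<forall>v. b (- v) = - b v) \<and>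
     (\<exists>W>0. (\<forall>v. b (v + W) = b v + pi) \<and>
            (\<forall>k::int. b (of_int k * W) = of_int k * pi) \<and>
            (\<forall>k::int. odd k \<longrightarrow> b (of_int k * W / 2) = of_int k * pi / 2))"
proof -
  have ev: "f (-x) = f x" for x
    using per[of x] refl[of "x + pi"] by simp
  define g where "g x = 1 / f x" for x
  have gcont: "isCont g x" for x
    unfolding g_def using cont pos by (intro continuous_intros) (auto simp: less_imp_neq[symmetric])
  have gpos: "g x > 0" for x unfolding g_def using pos[of x] by simp
  have Mpos: "M > 0" using pos[of 0] bnd[of 0] by linarith
  have glow: "g x \<ge> 1 / M" for x
    unfolding g_def using pos[of x] bnd[of x] Mpos by (simp add: frac_le)
  obtain G where G0: "\<And>x. (G has_vector_derivative g x) (at x)"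
    using einterval_antiderivative[of "-\<infinity>" "\<infinity>" g] gcont by auto
  have G: "(G has_real_derivative g x) (at x)" for x
    using G0 has_real_derivative_iff_has_vector_derivative by blast
  define F where "F x = G x - G 0" for x
  have FD: "(F has_real_derivative g x) (at x)" for x
    unfolding F_def using G[of x] by (auto intro!: derivative_eq_intros)
  have F0: "F 0 = 0" unfolding F_def by simp
  have Fcont: "isCont F x" for x using FD DERIV_isCont by blast
  have Fsm: "strict_mono F"
  proof (rule strict_monoI)
    fix x y :: real assume "x < y"
    then show "F x < F y"
      by (rule DERIV_pos_imp_increasing) (use FD gpos in blast)
  qed
  have Fge: "F x \<ge> x / M" if "x \<ge> 0" for x
  proof -
    have "F 0 - 0 / M \<le> F x - x / M"
      apply (rule DERIV_nonneg_imp_nondecreasing[of 0 x "\<lambda>x. F x - x / M"])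
      using that apply simp
      apply (rule_tac x="g _ - 1/M" in exI)
      using FD glow Mpos by (auto intro!: derivative_eq_intros)
    then show ?thesis using F0 by simp
  qed
  have Fle: "F x \<le> x / M" if "x \<le> 0" for x
  proof -
    have "F x - x / M \<le> F 0 - 0 / M"
      apply (rule DERIV_nonneg_imp_nondecreasing[of x 0 "\<lambda>x. F x - x / M"])
      using that apply simp
      apply (rule_tac x="g _ - 1/M" in exI)
      using FD glow Mpos by (auto intro!: derivative_eq_intros)
    then show ?thesis using F0 by simp
  qed
  have Fsurj: "surj F"
  proof -
    have "\<exists>x. F x = y" for y
    proof -
      define R where "R = \<bar>y\<bar> * M"
      have R0: "R \<ge> 0" unfolding R_def using Mpos by simp
      have "F (-R) \<le> -R / M" using Fle[of "-R"] R0 by simp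
      also have "-R / M = - \<bar>y\<bar>" unfolding R_def using Mpos by simp
      finally have a: "F (-R) \<le> y" by linarith
      have "R / M \<le> F R" using Fge R0 by simp
      moreover have "R / M = \<bar>y\<bar>" unfolding R_def using Mpos by simp
      ultimately have b: "y \<le> F R" by linarith
      show ?thesis using IVT[of F "-R" y R] a b R0 Fcont by auto
    qed
    then show ?thesis by (metis surjI)
  qed
  have Finj: "inj F" using Fsm strict_mono_imp_inj_on by blast
  have Fbij: "bij F" using Finj Fsurj bij_def by blast
  define b where "b = inv F"
  have Fb: "F (b y) = y" for y unfolding b_def using Fsurj surj_f_inv_f by metis
  have bF: "b (F x) = x" for x unfolding b_def using Finj inv_f_f by metis
  have b0: "b 0 = 0" using bF[of 0] F0 by simp
  have bcont: "isCont b y" for y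
  proof -
    have "isCont b (F (b y))"
      by (rule isCont_inverse_function[of 1]) (auto simp: bF Fcont)
    then show ?thesis using Fb by simp
  qed
  have bD: "(b has_real_derivative f (b y)) (at y)" for y
  proof -
    have "(b has_real_derivative inverse (g (b y))) (at y)"
      apply (rule DERIV_inverse_function[where f=F and g=b and D="g (b y)" and x=y and a="y - 1" and b="y + 1"])
      using FD gpos bcont Fb by (auto simp: less_imp_neq[symmetric])
    then show ?thesis unfolding g_def by simp
  qed
  have uniq: "c = b" if c0: "c 0 = 0" and cD: "\<forall>v. (c has_real_derivative f (c v)) (at v)" for c
  proof
    fix v
    have D: "\<And>x. ((\<lambda>v. F (c v) - v) has_real_derivative 0) (at x)"
    proof -
      fix x
      have "((\<lambda>v. F (c v) - v) has_real_derivative g (c x) * f (c x) - 1) (at x)"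
        using DERIV_chain2[OF FD cD[rule_format, of x]] by (auto intro!: derivative_eq_intros)
      moreover have "g (c x) * f (c x) - 1 = 0" unfolding g_def using pos[of "c x"] by simp
      ultimately show "((\<lambda>v. F (c v) - v) has_real_derivative 0) (at x)" by simp
    qed
    have "(\<lambda>v. F (c v) - v) v = (\<lambda>v. F (c v) - v) 0" by (rule const_from_deriv[OF D])
    then have "F (c v) = v" using c0 F0 by simp
    then show "c v = b v" using bF by metis
  qed
  have bsm: "strict_mono b"
  proof (rule strict_monoI)
    fix x y :: real assume "x < y"
    then have "F (b x) < F (b y)" using Fb by simp
    then show "b x < b y" using Fsm strict_mono_less by blast
  qed
  have diffeo: "real_diffeo b"
  proof -
    have bbij: "bij b" unfolding b_def using Fbij bij_imp_bij_inv by blast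
    have invb: "inv b = F" unfolding b_def using Fbij inv_inv_eq by blast
    have db: "deriv b = (\<lambda>y. f (b y))" using bD DERIV_imp_deriv by blast
    have dF: "deriv F = g" using FD DERIV_imp_deriv by blast
    have c1: "continuous_on UNIV (\<lambda>y. f (b y))"
      by (intro continuous_at_imp_continuous_on ballI isCont_o2[OF bcont cont])
    have c2: "continuous_on UNIV g"
      by (intro continuous_at_imp_continuous_on ballI gcont)
    show ?thesis unfolding real_diffeo_def invb db dF
      using bbij c1 c2 bD FD real_differentiable_def by blast
  qed
  have Fodd: "F (- x) = - F x" for x
  proof -
    have D: "\<And>x. ((\<lambda>x. F (- x) + F x) has_real_derivative 0) (at x)"
    proof -
      fix x
      have inner: "((\<lambda>x. - x) has_real_derivative -1) (at x)" by (auto intro!: derivative_eq_intros)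
      have "((\<lambda>x. F (- x) + F x) has_real_derivative g (- x) * (- 1) + g x) (at x)"
        by (rule DERIV_add[OF DERIV_chain2[OF FD inner] FD])
      moreover have "g (- x) * (- 1) + g x = 0" unfolding g_def using ev by simp
      ultimately show "((\<lambda>x. F (- x) + F x) has_real_derivative 0) (at x)" by simp
    qed
    have "(\<lambda>x. F (- x) + F x) x = (\<lambda>x. F (- x) + F x) 0" by (rule const_from_deriv[OF D])
    then show ?thesis using F0 by simp
  qed
  have bodd: "b (- v) = - b v" for v
    using Fodd[of "b v"] Fb bF by metis
  define W where "W = F pi"
  have Wpos: "W > 0" unfolding W_def using Fsm F0 strict_mono_less[of F 0 pi] by simp
  have Fper: "F (x + pi) = F x + W" for x
  proof -
    have D: "\<And>x. ((\<lambda>x. F (x + pi) - F x) has_real_derivative 0) (at x)"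
    proof -
      fix x
      have inner: "((\<lambda>x. x + pi) has_real_derivative 1) (at x)" by (auto intro!: derivative_eq_intros)
      have "((\<lambda>x. F (x + pi) - F x) has_real_derivative g (x + pi) * 1 - g x) (at x)"
        by (rule DERIV_diff[OF DERIV_chain2[OF FD inner] FD])
      moreover have "g (x + pi) * 1 - g x = 0" unfolding g_def using per by simp
      ultimately show "((\<lambda>x. F (x + pi) - F x) has_real_derivative 0) (at x)" by simp
    qed
    have "(\<lambda>x. F (x + pi) - F x) x = (\<lambda>x. F (x + pi) - F x) 0" by (rule const_from_deriv[OF D])
    then show ?thesis using F0 W_def by simp
  qed
  have bper: "b (v + W) = b v + pi" for v
    using Fper[of "b v"] Fb bF by metis
  have bpern: "b (v + real n * W) = b v + real n * pi" for v n
  proof (induction n arbitrary: v)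
    case 0 then show ?case by simp
  next
    case (Suc n)
    have "b (v + real (Suc n) * W) = b ((v + real n * W) + W)" by (simp add: algebra_simps)
    also have "\<dots> = b v + real n * pi + pi" using bper Suc by simp
    finally show ?case by (simp add: algebra_simps)
  qed
  have bperk: "b (v + of_int k * W) = b v + of_int k * pi" for v k
  proof (cases "k \<ge> 0")
    case True
    then obtain n where "k = int n" using nonneg_int_cases by blast
    then show ?thesis using bpern by simp
  next
    case False
    define n where "n = nat (- k)"
    have kn: "k = - int n" unfolding n_def using False by simp
    have "b ((v - real n * W) + real n * W) = b (v - real n * W) + real n * pi" by (rule bpern)
    then show ?thesis using kn by simp
  qed
  have Frefl: "F (pi - x) + F x = W" for x
  proof -
    have D: "\<And>x. ((\<lambda>x. F (pi - x) + F x) has_real_derivative 0) (at x)"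
    proof -
      fix x
      have inner: "((\<lambda>x. pi - x) has_real_derivative -1) (at x)" by (auto intro!: derivative_eq_intros)
      have "((\<lambda>x. F (pi - x) + F x) has_real_derivative g (pi - x) * (- 1) + g x) (at x)"
        by (rule DERIV_add[OF DERIV_chain2[OF FD inner] FD])
      moreover have "g (pi - x) * (- 1) + g x = 0" unfolding g_def using refl by simp
      ultimately show "((\<lambda>x. F (pi - x) + F x) has_real_derivative 0) (at x)" by simp
    qed
    have "(\<lambda>x. F (pi - x) + F x) x = (\<lambda>x. F (pi - x) + F x) 0" by (rule const_from_deriv[OF D])
    then show ?thesis using F0 W_def by simp
  qed
  have Fhalf: "F (pi / 2) = W / 2" using Frefl[of "pi/2"] by simp
  have bhalf: "b (W / 2) = pi / 2" using Fhalf bF by metis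
  have part_k: "\<forall>k::int. b (of_int k * W) = of_int k * pi"
    using bperk[of 0] b0 by simp
  have part_odd: "\<forall>k::int. odd k \<longrightarrow> b (of_int k * W / 2) = of_int k * pi / 2"
  proof (intro allI impI)
    fix k :: int assume "odd k"
    then obtain j where kj: "k = 2 * j + 1" by (metis oddE)
    have "of_int k * W / 2 = W / 2 + of_int j * W" using kj by (simp add: algebra_simps)
    then have "b (of_int k * W / 2) = pi / 2 + of_int j * pi" using bperk[of "W / 2" j] bhalf by (simp only:)
    then show "b (of_int k * W / 2) = of_int k * pi / 2" using kj by (simp add: algebra_simps)
  qed
  show ?thesis
    apply (rule exI[of _ b])
    using b0 bD uniq bsm diffeo bodd Wpos bper part_k part_odd by blast
qed

theorem proposition4p1:
  fixes l1 l2 K :: real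
  assumes lam: "(l1 > l2 \<and> l2 > 0) \<or> (l1 = 1 \<and> l2 = 1)"
    and K: "-1 < K" "K < 1"
  shows "\<exists>b. is_b_solution l1 l2 K b \<and> (\<forall>c. is_b_solution l1 l2 K c \<longrightarrow> c = b) \<and>
     strict_mono b \<and> real_diffeo b \<and>
     (\<forall>v. b (- v) = - b v) \<and>
     (\<exists>W>0. (\<forall>v. b (v + W) = b v + pi) \<and>
            (\<forall>k::int. b (of_int k * W) = of_int k * pi) \<and>
            (\<forall>k::int. odd k \<longrightarrow> b (of_int k * W / 2) = of_int k * pi / 2))"
proof -
  define A where "A = (1 - K) * l1\<^sup>2"
  define B where "B = l1\<^sup>2 - K * l2\<^sup>2"
  have l1pos: "l1 > 0" using lam by auto
  have A: "A > 0" unfolding A_def using K l1pos by simp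
  have B: "B > 0"
  proof (cases "K \<ge> 0")
    case True
    have "K * l2\<^sup>2 \<le> l2\<^sup>2" using True K by (simp add: mult_left_le_one_le)
    moreover have "l2\<^sup>2 < l1\<^sup>2 \<or> (l1 = 1 \<and> l2 = 1)" using lam
      by (auto intro: power_strict_mono)
    ultimately show ?thesis unfolding B_def using K by auto
  next
    case False
    then have "K * l2\<^sup>2 \<le> 0" by (simp add: mult_nonpos_nonneg)
    moreover have "l1\<^sup>2 > 0" using l1pos by simp
    ultimately show ?thesis unfolding B_def by linarith
  qed
  have Q: "l1\<^sup>2 - K * (l1\<^sup>2 * (cos x)\<^sup>2 + l2\<^sup>2 * (sin x)\<^sup>2) = A * (cos x)\<^sup>2 + B * (sin x)\<^sup>2" for x
  proof -
    have gen: "l1\<^sup>2 - K * (l1\<^sup>2 * c + l2\<^sup>2 * s) - (A * c + B * s)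
      = l1\<^sup>2 * (1 - (c + s))" for c s :: real unfolding A_def B_def by (simp add: algebra_simps)
    show ?thesis using gen[of "(cos x)\<^sup>2" "(sin x)\<^sup>2"] by simp
  qed
  have f_eq: "bRHS l1 l2 K x = sqrt (A * (cos x)\<^sup>2 + B * (sin x)\<^sup>2)" for x
    unfolding bRHS_def Q ..
  have Qpos: "A * (cos x)\<^sup>2 + B * (sin x)\<^sup>2 > 0" for x
  proof -
    have gen2: "min A B * (c + s) \<le> A * c + B * s" if "c \<ge> 0" "s \<ge> 0" for c s :: real
      using mult_right_mono[of "min A B" A c] mult_right_mono[of "min A B" B s] that
      by (simp add: distrib_left)
    have "min A B \<le> A * (cos x)\<^sup>2 + B * (sin x)\<^sup>2"
      using gen2[of "(cos x)\<^sup>2" "(sin x)\<^sup>2"] by simp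
    then show ?thesis using A B by simp
  qed
  have Qle: "A * (cos x)\<^sup>2 + B * (sin x)\<^sup>2 \<le> A + B" for x
  proof -
    have c1: "(cos x)\<^sup>2 \<le> 1" and s1: "(sin x)\<^sup>2 \<le> 1"
      using sin_cos_squared_add[of x] zero_le_power2[of "sin x"] zero_le_power2[of "cos x"] by linarith+
    have "A * (cos x)\<^sup>2 \<le> A" using A c1 by (simp add: mult_left_le)
    moreover have "B * (sin x)\<^sup>2 \<le> B" using B s1 by (simp add: mult_left_le)
    ultimately show ?thesis by simp
  qed
  have "\<exists>b. (b 0 = 0 \<and> (\<forall>v. (b has_real_derivative bRHS l1 l2 K (b v)) (at v))) \<and>
     (\<forall>c. (c 0 = 0 \<and> (\<forall>v. (c has_real_derivative bRHS l1 l2 K (c v)) (at v))) \<longrightarrow> c = b) \<and>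
     strict_mono b \<and> real_diffeo b \<and>
     (\<forall>v. b (- v) = - b v) \<and>
     (\<exists>W>0. (\<forall>v. b (v + W) = b v + pi) \<and>
            (\<forall>k::int. b (of_int k * W) = of_int k * pi) \<and>
            (\<forall>k::int. odd k \<longrightarrow> b (of_int k * W / 2) = of_int k * pi / 2))"
  proof (rule main_lemma[where M = "sqrt (A + B)"])
    show "isCont (bRHS l1 l2 K) x" for x unfolding f_eq by (intro continuous_intros)
    show "bRHS l1 l2 K x > 0" for x unfolding f_eq using Qpos by simp
    show "bRHS l1 l2 K x \<le> sqrt (A + B)" for x unfolding f_eq using Qle by simp
    show "bRHS l1 l2 K (x + pi) = bRHS l1 l2 K x" for x unfolding f_eq by simp
    show "bRHS l1 l2 K (pi - x) = bRHS l1 l2 K x" for x unfolding f_eq by simp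
  qed
  then show ?thesis unfolding is_b_solution_def .
qed

end
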